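(* Let $(\tau_i)_{i\in\mathbb{N}}$ be i.i.d. nonnegative strictly $\beta$-stable random variables, $\beta\in(0,1)$. Let $T(0)=0$, $T(n)=\tau_1+\dots+\tau_n$ and $N_t=\max\{n\ge0: T(n)\le t\}$. Then there is a constant $M$ such that for each $t\ge0$, $$E\left[\frac{N_{nt}}{n^\beta}\right]\le t^\beta M\quad\text{for all } n\ge1.$$ *)

theory Defs
  imports "HOL-Probability.Probability" "HOL-Probability.Convolution"
begin

fun conv_pow :: "real measure \<Rightarrow> nat \<Rightarrow> real measure" where
  "conv_pow \<mu> 0 = return borel 0"
| "conv_pow \<mu> (Suc n) = convolution \<mu> (conv_pow \<mu> n)"

definition strictly_stable :: "real \<Rightarrow> real measure \<Rightarrow> bool" where
  "strictly_stable \<beta> \<mu> \<longleftrightarrow>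
     prob_space \<mu> \<and> sets \<mu> = sets borel \<and> \<mu> \<noteq> return borel 0 \<and>
     (\<forall>n::nat\<ge>1. conv_pow \<mu> n = distr \<mu> borel (\<lambda>x. real n powr (1/\<beta>) * x))"

definition partial_sum :: "(nat \<Rightarrow> 'a \<Rightarrow> real) \<Rightarrow> nat \<Rightarrow> 'a \<Rightarrow> real" where
  "partial_sum \<tau> n \<omega> = (\<Sum>i=1..n. \<tau> i \<omega>)"

text \<open>Counting process N_t = max {n \<ge> 0. T(n) \<le> t}, taken in enat (value \<infinity> if unbounded).\<close>
definition count_proc :: "(nat \<Rightarrow> 'a \<Rightarrow> real) \<Rightarrow> real \<Rightarrow> 'a \<Rightarrow> enat" where
  "count_proc \<tau> t \<omega> = Sup {enat n | n. partial_sum \<tau> n \<omega> \<le> t}"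

end

theory Submission
  imports Defs
begin

lemma distr_zero_return:
  assumes "prob_space M"
  shows "distr M borel (\<lambda>_. 0::real) = return borel 0"
proof (rule measure_eqI)
  fix A assume "A \<in> sets (distr M borel (\<lambda>_. 0::real))"
  then have A: "A \<in> sets borel" by simp
  show "emeasure (distr M borel (\<lambda>_. 0::real)) A = emeasure (return borel 0) A"
    using A assms by (auto simp: emeasure_distr emeasure_return prob_space.emeasure_space_1)
qed simp

lemma partial_sum_distr:
  fixes M :: "'a measure" and \<tau> :: "nat \<Rightarrow> 'a \<Rightarrow> real"
  assumes P: "prob_space M" and ind: "prob_space.indep_vars M (\<lambda>_. borel) \<tau> {1..}"
    and id: "\<And>i. i \<ge> 1 \<Longrightarrow> distr M borel (\<tau> i) = distr M borel (\<tau> 1)"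
  shows "distr M borel (partial_sum \<tau> k) = conv_pow (distr M borel (\<tau> 1)) k"
proof (induction k)
  case 0
  have "partial_sum \<tau> 0 = (\<lambda>_. 0)" by (auto simp: partial_sum_def fun_eq_iff)
  then show ?case using distr_zero_return[OF P] by simp
next
  case (Suc k)
  interpret prob_space M by fact
  have meas: "\<And>i. i \<ge> 1 \<Longrightarrow> \<tau> i \<in> borel_measurable M"
    using ind unfolding indep_vars_def by auto
  have eq: "partial_sum \<tau> (Suc k) = (\<lambda>\<omega>. \<tau> (Suc k) \<omega> + (\<Sum>i\<in>{1..k}. \<tau> i \<omega>))"
    by (auto simp: partial_sum_def fun_eq_iff add.commute)
  have ind2: "indep_vars (\<lambda>_. borel) \<tau> (insert (Suc k) {1..k})"
    by (rule indep_vars_subset[OF ind]) auto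
  have iv: "indep_var borel (\<tau> (Suc k)) borel (\<lambda>\<omega>. \<Sum>i\<in>{1..k}. \<tau> i \<omega>)"
    by (rule indep_vars_sum[OF _ _ ind2]) auto
  have "distr M borel (partial_sum \<tau> (Suc k))
      = convolution (distr M borel (\<tau> (Suc k))) (distr M borel (\<lambda>\<omega>. \<Sum>i\<in>{1..k}. \<tau> i \<omega>))"
    unfolding eq by (rule sum_indep_random_variable[OF iv]) (auto intro!: meas borel_measurable_sum)
  also have "(\<lambda>\<omega>. \<Sum>i\<in>{1..k}. \<tau> i \<omega>) = partial_sum \<tau> k"
    by (auto simp: partial_sum_def fun_eq_iff)
  finally show ?case using Suc id[of "Suc k"] by simp
qed

lemma partial_sum_meas:
  assumes "prob_space M" "prob_space.indep_vars M (\<lambda>_. borel) \<tau> {1..}"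
  shows "partial_sum \<tau> k \<in> borel_measurable M"
proof -
  have "\<And>i. i \<ge> 1 \<Longrightarrow> \<tau> i \<in> borel_measurable M"
    using assms unfolding prob_space.indep_vars_def[OF assms(1)] by auto
  then show ?thesis unfolding partial_sum_def by (auto intro!: borel_measurable_sum)
qed

lemma law:
  fixes M :: "'a measure" and \<tau> :: "nat \<Rightarrow> 'a \<Rightarrow> real"
  assumes P: "prob_space M" and ind: "prob_space.indep_vars M (\<lambda>_. borel) \<tau> {1..}"
    and id: "\<And>i. i \<ge> 1 \<Longrightarrow> distr M borel (\<tau> i) = distr M borel (\<tau> 1)"
    and st: "strictly_stable \<beta> (distr M borel (\<tau> 1))" and k: "k \<ge> 1" and b: "\<beta> > 0"
  shows "measure M {\<omega>\<in>space M. partial_sum \<tau> k \<omega> \<le> s}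
       = measure M {\<omega>\<in>space M. \<tau> 1 \<omega> \<le> s / real k powr (1/\<beta>)}"
proof -
  define c where "c = real k powr (1/\<beta>)"
  have c: "c > 0" using k by (simp add: c_def)
  have m1: "\<tau> 1 \<in> borel_measurable M"
    using ind unfolding prob_space.indep_vars_def[OF P] by auto
  have mT: "partial_sum \<tau> k \<in> borel_measurable M" by (rule partial_sum_meas[OF P ind])
  have "measure M {\<omega>\<in>space M. partial_sum \<tau> k \<omega> \<le> s}
      = measure (distr M borel (partial_sum \<tau> k)) {..s}"
    using mT by (subst measure_distr) (auto intro!: arg_cong[where f="measure M"])
  also have "\<dots> = measure (distr (distr M borel (\<tau> 1)) borel (\<lambda>x. c * x)) {..s}"
    using st k partial_sum_distr[OF P ind id, of k] unfolding strictly_stable_def c_def by auto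
  also have "\<dots> = measure (distr M borel (\<tau> 1)) ((\<lambda>x. c * x) -` {..s})"
    by (subst measure_distr) auto
  also have "(\<lambda>x. c * x) -` {..s} = {..s / c}"
    using c by (auto simp: field_simps)
  also have "measure (distr M borel (\<tau> 1)) {..s / c} = measure M {\<omega>\<in>space M. \<tau> 1 \<omega> \<le> s / c}"
    using m1 by (subst measure_distr) (auto intro!: arg_cong[where f="measure M"])
  finally show ?thesis by (simp add: c_def)
qed

lemma indep_bound:
  fixes M :: "'a measure" and \<tau> :: "nat \<Rightarrow> 'a \<Rightarrow> real"
  assumes P: "prob_space M" and ind: "prob_space.indep_vars M (\<lambda>_. borel) \<tau> {1..}"
    and id: "\<And>i. i \<ge> 1 \<Longrightarrow> distr M borel (\<tau> i) = distr M borel (\<tau> 1)"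
    and nn: "\<And>i. i \<ge> 1 \<Longrightarrow> AE \<omega> in M. \<tau> i \<omega> \<ge> 0"
    and k: "k \<ge> 1"
  shows "measure M {\<omega>\<in>space M. partial_sum \<tau> k \<omega> \<le> s}
       \<le> (measure M {\<omega>\<in>space M. \<tau> 1 \<omega> \<le> s}) ^ k"
proof -
  interpret prob_space M by fact
  have meas: "\<And>i. i \<ge> 1 \<Longrightarrow> \<tau> i \<in> borel_measurable M"
    using ind unfolding indep_vars_def by auto
  define A where "A i = \<tau> i -` {..s} \<inter> space M" for i
  have Aev: "\<And>i. i \<ge> 1 \<Longrightarrow> A i \<in> events" unfolding A_def using meas by auto
  have "AE \<omega> in M. \<forall>i. i \<ge> 1 \<longrightarrow> \<tau> i \<omega> \<ge> 0"
    using nn by (subst AE_all_countable) auto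
  then have "AE \<omega>\<in>{\<omega>\<in>space M. partial_sum \<tau> k \<omega> \<le> s} in M. \<omega> \<in> (\<Inter>i\<in>{1..k}. A i)"
  proof (eventually_elim)
    case (elim \<omega>)
    show ?case
    proof
      assume \<omega>: "\<omega> \<in> {\<omega>\<in>space M. partial_sum \<tau> k \<omega> \<le> s}"
      { fix i assume i: "i \<in> {1..k}"
        have "\<tau> i \<omega> \<le> (\<Sum>j\<in>{1..k}. \<tau> j \<omega>)"
          using i elim by (intro member_le_sum) auto
        then have "\<omega> \<in> A i" using \<omega> by (auto simp: A_def partial_sum_def) }
      then show "\<omega> \<in> (\<Inter>i\<in>{1..k}. A i)" by auto
    qed
  qed
  then have "prob {\<omega>\<in>space M. partial_sum \<tau> k \<omega> \<le> s} \<le> prob (\<Inter>i\<in>{1..k}. A i)"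
    using k Aev by (intro finite_measure_mono_AE) auto
  also have "prob (\<Inter>i\<in>{1..k}. A i) = (\<Prod>i\<in>{1..k}. prob (A i))"
  proof -
    let ?F = "\<lambda>i. { \<tau> i -` B \<inter> space M | B. B \<in> sets borel}"
    have "indep_sets ?F {1..}"
      using ind unfolding indep_vars_def2 by auto
    then have H: "\<forall>J\<subseteq>{1..}. J \<noteq> {} \<longrightarrow> finite J \<longrightarrow> (\<forall>A\<in>Pi J ?F. prob (\<Inter>j\<in>J. A j) = (\<Prod>j\<in>J. prob (A j)))"
      unfolding indep_sets_def by (rule conjunct2)
    have Am: "A \<in> Pi {1..k} ?F"
      unfolding A_def by (auto intro!: exI[of _ "{..s}"])
    have "{1..k} \<subseteq> {1::nat..}" "{1..k} \<noteq> {}" "finite {1..k}" using k by auto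
    from H[rule_format, OF this Am] show ?thesis .
  qed
  also have "\<dots> = (\<Prod>i\<in>{1..k}. prob {\<omega>\<in>space M. \<tau> 1 \<omega> \<le> s})"
  proof (rule prod.cong[OF refl])
    fix i assume i: "i \<in> {1..k}"
    have "prob (A i) = measure (distr M borel (\<tau> i)) {..s}"
      unfolding A_def using meas i by (subst measure_distr) auto
    also have "\<dots> = measure (distr M borel (\<tau> 1)) {..s}" using id[of i] i by simp
    also have "\<dots> = prob {\<omega>\<in>space M. \<tau> 1 \<omega> \<le> s}"
      using meas[of 1] by (subst measure_distr) (auto intro!: arg_cong[where f=prob])
    finally show "prob (A i) = prob {\<omega>\<in>space M. \<tau> 1 \<omega> \<le> s}" .
  qed
  also have "\<dots> = (prob {\<omega>\<in>space M. \<tau> 1 \<omega> \<le> s}) ^ k" by simp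
  finally show ?thesis .
qed

lemma count_le:
  fixes M :: "'a measure" and \<tau> :: "nat \<Rightarrow> 'a \<Rightarrow> real"
  assumes P: "prob_space M" and ind: "prob_space.indep_vars M (\<lambda>_. borel) \<tau> {1..}"
    and nn: "\<And>i. i \<ge> 1 \<Longrightarrow> AE \<omega> in M. \<tau> i \<omega> \<ge> 0"
  shows "(\<integral>\<^sup>+\<omega>. ennreal_of_enat (count_proc \<tau> s \<omega>) / c \<partial>M)
     \<le> (\<Sum>j. ennreal (measure M {\<omega>\<in>space M. partial_sum \<tau> (Suc j) \<omega> \<le> s})) / c"
proof -
  interpret prob_space M by fact
  define B where "B j = {\<omega>\<in>space M. partial_sum \<tau> (Suc j) \<omega> \<le> s}" for j
  have Bm: "B j \<in> sets M" for j
    unfolding B_def using partial_sum_meas[OF P ind] by measurable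
  have "AE \<omega> in M. \<forall>i. i \<ge> 1 \<longrightarrow> \<tau> i \<omega> \<ge> 0"
    using nn by (subst AE_all_countable) auto
  from this AE_space have "AE \<omega> in M. ennreal_of_enat (count_proc \<tau> s \<omega>) / c \<le> (\<Sum>j. indicator (B j) \<omega>) / c"
  proof (eventually_elim)
    case (elim \<omega>)
    show ?case
    proof (rule divide_right_mono_ennreal)
      show "ennreal_of_enat (count_proc \<tau> s \<omega>) \<le> (\<Sum>j. indicator (B j) \<omega>)"
        unfolding count_proc_def ennreal_of_enat_Sup
      proof (rule Sup_least)
        fix x assume "x \<in> ennreal_of_enat ` {enat n |n. partial_sum \<tau> n \<omega> \<le> s}"
        then obtain n where x: "x = ennreal_of_enat (enat n)" and n: "partial_sum \<tau> n \<omega> \<le> s"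
          by auto
        have "(\<Sum>j<n. indicator (B j) \<omega> :: ennreal) = (\<Sum>j<n. 1)"
        proof (rule sum.cong[OF refl])
          fix j assume j: "j \<in> {..<n}"
          have "partial_sum \<tau> (Suc j) \<omega> \<le> partial_sum \<tau> n \<omega>"
            unfolding partial_sum_def using j elim by (intro sum_mono2) auto
          then show "indicator (B j) \<omega> = (1::ennreal)" using n elim by (auto simp: B_def)
        qed
        then have "x = (\<Sum>j<n. indicator (B j) \<omega>)" using x by simp
        also have "\<dots> \<le> (\<Sum>j. indicator (B j) \<omega>)"
          by (rule sum_le_suminf) (auto intro: summableI)
        finally show "x \<le> (\<Sum>j. indicator (B j) \<omega>)" .
      qed
    qed
  qed
  then have "(\<integral>\<^sup>+\<omega>. ennreal_of_enat (count_proc \<tau> s \<omega>) / c \<partial>M) \<le> (\<integral>\<^sup>+\<omega>. (\<Sum>j. indicator (B j) \<omega>) / c \<partial>M)"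
    by (rule nn_integral_mono_AE)
  also have "\<dots> = (\<integral>\<^sup>+\<omega>. (\<Sum>j. indicator (B j) \<omega>) \<partial>M) / c"
    by (rule nn_integral_divide) (use Bm in measurable)
  also have "(\<integral>\<^sup>+\<omega>. (\<Sum>j. indicator (B j) \<omega>) \<partial>M) = (\<Sum>j. emeasure M (B j))"
    using Bm by (subst nn_integral_suminf) auto
  also have "\<dots> = (\<Sum>j. ennreal (measure M (B j)))"
    by (simp add: emeasure_eq_measure)
  finally show ?thesis unfolding B_def .
qed

theorem lemma3p4:
  fixes M :: "'a measure" and \<tau> :: "nat \<Rightarrow> 'a \<Rightarrow> real" and \<beta> :: real
  assumes "prob_space M"
    and "0 < \<beta>" and "\<beta> < 1"
    and "prob_space.indep_vars M (\<lambda>_. borel) \<tau> {1..}"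
    and "\<And>i. i \<ge> 1 \<Longrightarrow> distr M borel (\<tau> i) = distr M borel (\<tau> 1)"
    and "\<And>i. i \<ge> 1 \<Longrightarrow> AE \<omega> in M. \<tau> i \<omega> \<ge> 0"
    and "strictly_stable \<beta> (distr M borel (\<tau> 1))"
  shows "\<exists>C::real. \<forall>t\<ge>0. \<forall>n::nat\<ge>1.
    (\<integral>\<^sup>+ \<omega>. ennreal_of_enat (count_proc \<tau> (real n * t) \<omega>) / ennreal (real n powr \<beta>) \<partial>M)
      \<le> ennreal (t powr \<beta> * C)"
proof -
  note P = assms(1) and b = assms(2) and ind = assms(4) and id = assms(5) and nn = assms(6)
    and st = assms(7)
  interpret prob_space M by fact
  have m1: "\<tau> 1 \<in> borel_measurable M"
    using ind unfolding indep_vars_def by auto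
  define F where "F x = prob {\<omega>\<in>space M. \<tau> 1 \<omega> \<le> x}" for x
  define Pk where "Pk k s = prob {\<omega>\<in>space M. partial_sum \<tau> k \<omega> \<le> s}" for k s
  have Fmono: "F x \<le> F y" if "x \<le> y" for x y
    unfolding F_def using that m1 by (intro finite_measure_mono) auto
  have F01: "0 \<le> F x" "F x \<le> 1" for x unfolding F_def by auto
  have L: "Pk k s = F (s / real k powr (1/\<beta>))" if "k \<ge> 1" for k s
    unfolding Pk_def F_def by (rule law[OF P ind id st that b])
  have I: "Pk k s \<le> F s ^ k" if "k \<ge> 1" for k s
    unfolding Pk_def F_def by (rule indep_bound[OF P ind id nn that])
  have "\<exists>y0>0. F y0 < 1"
  proof (rule ccontr)
    assume "\<not> ?thesis"
    then have "\<forall>y>0. F y = 1" using F01 by (meson not_less order_antisym)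
    have "\<forall>j::nat. AE \<omega> in M. \<tau> 1 \<omega> \<le> 1 / Suc j"
    proof
      fix j :: nat
      have "prob {\<omega>\<in>space M. \<tau> 1 \<omega> \<le> 1 / Suc j} = 1"
        using \<open>\<forall>y>0. F y = 1\<close> unfolding F_def by simp
      from AE_prob_1[OF this] show "AE \<omega> in M. \<tau> 1 \<omega> \<le> 1 / Suc j"
        by eventually_elim auto
    qed
    then have "AE \<omega> in M. \<forall>j::nat. \<tau> 1 \<omega> \<le> 1 / Suc j"
      by (rule AE_all_countable[THEN iffD2])
    moreover have "AE \<omega> in M. \<tau> 1 \<omega> \<ge> 0" using nn[of 1] by simp
    ultimately have "AE \<omega> in M. \<tau> 1 \<omega> = 0"
    proof eventually_elim
      case (elim \<omega>)
      show ?case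
      proof (rule ccontr)
        assume "\<tau> 1 \<omega> \<noteq> 0"
        then have "\<tau> 1 \<omega> > 0" using elim by simp
        then obtain j where "inverse (real (Suc j)) < \<tau> 1 \<omega>" using reals_Archimedean by blast
        then show False using elim(1)[rule_format, of j] by (simp add: field_simps)
      qed
    qed
    then have "distr M borel (\<tau> 1) = distr M borel (\<lambda>_. 0)"
      using m1 by (intro distr_cong_AE) (auto simp del: One_nat_def)
    also have "\<dots> = return borel 0" by (rule distr_zero_return[OF P])
    finally show False using st unfolding strictly_stable_def by simp
  qed
  then obtain y0 where y0: "y0 > 0" "F y0 < 1" by blast
  define q where "q = max (F y0) (1/2)"
  have q: "0 < q" "q < 1" "F y0 \<le> q" using y0 unfolding q_def by auto
  define a where "a = - ln q"
  have a: "a > 0" using q unfolding a_def by simp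
  have qa: "q = exp (- a)" using q unfolding a_def by simp
  have F0: "F 0 = 0"
  proof -
    have "F 0 = Pk 2 0" using L[of 2 0] by simp
    also have "\<dots> \<le> F 0 ^ 2" using I[of 2 0] by simp
    finally have "F 0 \<le> F 0 ^ 2" .
    moreover have "F 0 < 1" using Fmono[of 0 y0] y0 by simp
    ultimately show ?thesis using F01[of 0] by (simp add: power2_eq_square) (smt (verit) mult_le_cancel_left1)
  qed
  have bound: "Pk k s \<le> (1/q) * exp (- a * ((y0/s) powr \<beta>)) ^ k" if s: "s > 0" and k: "k \<ge> 1" for k s
  proof -
    define r where "r = (y0/s) powr \<beta>"
    have r: "r > 0" using s y0 unfolding r_def by simp
    have tgt: "(1/q) * exp (- a * r) ^ k = exp (a * (1 - real k * r))"
    proof -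
      have e1: "1/q = exp a" using qa by (simp add: exp_minus divide_inverse)
      have e2: "exp (- a * r) ^ k = exp (real k * (- a * r))" by (rule exp_of_nat_mult[symmetric])
      have "exp a * exp (real k * (- a * r)) = exp (a + real k * (- a * r))" by (rule exp_add[symmetric])
      also have "a + real k * (- a * r) = a * (1 - real k * r)" by (simp add: algebra_simps)
      finally show ?thesis using e1 e2 by simp
    qed
    have Pk1: "Pk k s \<le> 1" unfolding Pk_def by simp
    define m where "m = nat \<lfloor>real k * r\<rfloor>"
    show ?thesis
    proof (cases "m = 0")
      case True
      then have "real k * r < 1" unfolding m_def by linarith
      then have E: "1 \<le> exp (a * (1 - real k * r))" using a by (intro one_le_exp_iff[THEN iffD2]) simp
      show ?thesis unfolding r_def[symmetric] using Pk1 tgt E by linarith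
    next
      case False
      then have m1: "m \<ge> 1" by simp
      have fm: "real m = of_int \<lfloor>real k * r\<rfloor>" unfolding m_def using r by simp
      have mle: "real m \<le> real k * r" using fm by (simp add: of_int_floor_le)
      have mgt: "real m > real k * r - 1" using fm real_of_int_floor_gt_diff_one[of "real k * r"] by simp
      have "real m powr (1/\<beta>) \<le> (real k * r) powr (1/\<beta>)"
        using mle b by (intro powr_mono2) auto
      also have "\<dots> = real k powr (1/\<beta>) * (y0 / s)"
        using r s y0 b unfolding r_def by (simp add: powr_mult powr_powr)
      finally have A: "real m powr (1/\<beta>) \<le> real k powr (1/\<beta>) * (y0 / s)" .
      have kp: "real k powr (1/\<beta>) > 0" "real m powr (1/\<beta>) > 0" using k m1 by auto
      have "s / real k powr (1/\<beta>) \<le> y0 / real m powr (1/\<beta>)"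
        using A kp s by (simp add: field_simps)
      then have "Pk k s \<le> F (y0 / real m powr (1/\<beta>))" using L[OF k] Fmono by simp
      also have "\<dots> = Pk m y0" using L[OF m1] by simp
      also have "\<dots> \<le> F y0 ^ m" by (rule I[OF m1])
      also have "\<dots> \<le> q ^ m" using q F01 by (intro power_mono) auto
      also have "\<dots> = exp (- a * real m)" using qa by (simp add: exp_of_nat_mult[symmetric] mult.commute)
      also have "\<dots> \<le> exp (a * (1 - real k * r))" proof -
        have "a * (real k * r) \<le> a * (1 + real m)" using mgt a by (intro mult_left_mono) auto
        then show ?thesis by (simp add: algebra_simps)
      qed
      finally show ?thesis unfolding r_def[symmetric] using tgt by linarith
    qed
  qed
  have sumb: "(\<Sum>j. ennreal (Pk (Suc j) s)) \<le> ennreal (s powr \<beta> / (q * a * y0 powr \<beta>))" if s: "s > 0" for s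
  proof -
    define r where "r = (y0/s) powr \<beta>"
    have r: "r > 0" using s y0 unfolding r_def by simp
    define u where "u = a * r"
    have u: "u > 0" using a r unfolding u_def by simp
    define x where "x = exp (- u)"
    have x: "0 < x" "x < 1" using u unfolding x_def by auto
    have "(\<Sum>j. ennreal (Pk (Suc j) s)) \<le> (\<Sum>j. ennreal ((x/q) * x ^ j))"
    proof (rule suminf_le)
      fix j
      have "Pk (Suc j) s \<le> (1/q) * exp (- a * r) ^ Suc j"
        using bound[OF s, of "Suc j"] unfolding r_def by simp
      also have "\<dots> = (x/q) * x ^ j" unfolding x_def u_def by simp
      finally show "ennreal (Pk (Suc j) s) \<le> ennreal ((x/q) * x ^ j)" by (rule ennreal_leI)
    qed (auto intro: summableI)
    also have "\<dots> = ennreal (\<Sum>j. (x/q) * x ^ j)"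
      using x q by (intro suminf_ennreal2) (auto intro!: summable_mult summable_geometric)
    also have "(\<Sum>j. (x/q) * x ^ j) = (x/q) * (1 / (1 - x))"
      using x by (subst suminf_mult) (auto simp: suminf_geometric summable_geometric)
    also have "\<dots> \<le> s powr \<beta> / (q * a * y0 powr \<beta>)"
    proof -
      have "1 + u \<le> exp u" by (rule exp_ge_add_one_self)
      have ex: "x * exp u = 1" unfolding x_def by (simp add: exp_minus)
      have "x / (1 - x) = 1 / (exp u - 1)"
        using x ex u by (simp add: field_simps)
      also have "\<dots> \<le> 1 / u" using \<open>1 + u \<le> exp u\<close> u by (intro divide_left_mono) (linarith, auto)
      finally have "x / (1 - x) \<le> 1 / u" .
      then have "(x/q) * (1 / (1 - x)) \<le> (1/q) * (1/u)"
      proof -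
        have "(x/q) * (1 / (1 - x)) = (1/q) * (x / (1 - x))" by simp
        also have "\<dots> \<le> (1/q) * (1/u)" using q \<open>x / (1 - x) \<le> 1 / u\<close> by (intro mult_left_mono) auto
        finally show ?thesis .
      qed
      also have "(1/q) * (1/u) = s powr \<beta> / (q * a * y0 powr \<beta>)"
        unfolding u_def r_def using s y0 q a by (simp add: powr_divide field_simps)
      finally show ?thesis .
    qed
    finally show ?thesis by (simp add: ennreal_leI)
  qed
  have sum0: "(\<Sum>j. ennreal (Pk (Suc j) 0)) = 0"
    using L F0 by simp
  show ?thesis
  proof (intro exI[of _ "1 / (q * a * y0 powr \<beta>)"] allI impI)
    fix t :: real and n :: nat assume t: "t \<ge> 0" and n: "n \<ge> 1"
    have "(\<integral>\<^sup>+ \<omega>. ennreal_of_enat (count_proc \<tau> (real n * t) \<omega>) / ennreal (real n powr \<beta>) \<partial>M)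
       \<le> (\<Sum>j. ennreal (Pk (Suc j) (real n * t))) / ennreal (real n powr \<beta>)"
      unfolding Pk_def by (rule count_le[OF P ind nn])
    also have "\<dots> \<le> ennreal (t powr \<beta> * (1 / (q * a * y0 powr \<beta>)))"
    proof (cases "t = 0")
      case True then show ?thesis using sum0 by simp
    next
      case False
      then have tp: "t > 0" using t by simp
      have "(\<Sum>j. ennreal (Pk (Suc j) (real n * t))) / ennreal (real n powr \<beta>)
          \<le> ennreal ((real n * t) powr \<beta> / (q * a * y0 powr \<beta>)) / ennreal (real n powr \<beta>)"
        using tp n by (intro divide_right_mono_ennreal sumb) simp
      also have "\<dots> = ennreal ((real n * t) powr \<beta> / (q * a * y0 powr \<beta>) / real n powr \<beta>)"
        using tp n q a by (intro divide_ennreal) auto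
      also have "(real n * t) powr \<beta> / (q * a * y0 powr \<beta>) / real n powr \<beta> = t powr \<beta> * (1 / (q * a * y0 powr \<beta>))"
        using tp n by (simp add: powr_mult field_simps)
      finally show ?thesis .
    qed
    finally show "(\<integral>\<^sup>+ \<omega>. ennreal_of_enat (count_proc \<tau> (real n * t) \<omega>) / ennreal (real n powr \<beta>) \<partial>M)
      \<le> ennreal (t powr \<beta> * (1 / (q * a * y0 powr \<beta>)))" .
  qed
qed

end
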